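(* Let $S$ be an intra-regular $\Gamma$-AG$^{**}$-groupoid and $A$ a nonempty subset of $S$. The following are equivalent: (i) $A$ is a left $\Gamma$-ideal of $S$; (ii) $A$ is a right $\Gamma$-ideal; (iii) $A$ is a two-sided $\Gamma$-ideal; (iv) $A\Gamma S=A$ and $S\Gamma A=A$; (v) $A$ is a $\Gamma$-quasi ideal; (vi) $A$ is a $\Gamma$-$(1,2)$-ideal; (vii) $A$ is a $\Gamma$-generalized bi-ideal; (viii) $A$ is a $\Gamma$-bi-ideal; (ix) $A$ is a $\Gamma$-interior ideal.
   Context: Let $S$ and $\Gamma$ be nonempty sets with a map $S\times\Gamma\times S\to S$, $(x,\gamma,y)\mapsto x\gamma y$. $S$ is a $\Gamma$-AG-groupoid if $(x\gamma y)\delta z=(z\gamma y)\delta x$ for all $x,y,z\in S$, $\gamma,\delta\in\Gamma$; it is a $\Gamma$-AG$^{**}$-groupoid if moreover $a\alpha(b\beta c)=b\alpha(a\beta c)$ for all $a,b,c\in S$, $\alpha,\beta\in\Gamma$. For subsets $A,B\subseteq S$, $A\Gamma B=\{a\gamma b: a\in A,\gamma\in\Gamma,b\in B\}$. $S$ is intra-regular if for every $a\in S$ there exist $x,y\in S$ and $\beta,\gamma,\delta\in\Gamma$ with $a=(x\beta(a\delta a))\gamma y$. For a nonempty $A\subseteq S$: left (right) $\Gamma$-ideal means $S\Gamma A\subseteq A$ ($A\Gamma S\subseteq A$); two-sided $\Gamma$-ideal means both; $\Gamma$-generalized bi-ideal means $(A\Gamma S)\Gamma A\subseteq A$. The following all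 require $A\Gamma A\subseteq A$ in addition: $\Gamma$-bi-ideal: $(A\Gamma S)\Gamma A\subseteq A$; $\Gamma$-interior ideal: $(S\Gamma A)\Gamma S\subseteq A$; $\Gamma$-quasi ideal: $S\Gamma A\cap A\Gamma S\subseteq A$; $\Gamma$-$(1,2)$-ideal: $(A\Gamma S)\Gamma(A\Gamma A)\subseteq A$. *)

theory Defs
  imports Main
begin

definition gamma_closed :: "'a set \<Rightarrow> 'g set \<Rightarrow> ('a \<Rightarrow> 'g \<Rightarrow> 'a \<Rightarrow> 'a) \<Rightarrow> bool" where
  "gamma_closed S G m \<longleftrightarrow> (\<forall>x\<in>S. \<forall>g\<in>G. \<forall>y\<in>S. m x g y \<in> S)"

definition gamma_AG :: "'a set \<Rightarrow> 'g set \<Rightarrow> ('a \<Rightarrow> 'g \<Rightarrow> 'a \<Rightarrow> 'a) \<Rightarrow> bool" where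
  "gamma_AG S G m \<longleftrightarrow> S \<noteq> {} \<and> G \<noteq> {} \<and> gamma_closed S G m \<and>
     (\<forall>x\<in>S. \<forall>y\<in>S. \<forall>z\<in>S. \<forall>g\<in>G. \<forall>d\<in>G. m (m x g y) d z = m (m z g y) d x)"

definition gamma_AGss :: "'a set \<Rightarrow> 'g set \<Rightarrow> ('a \<Rightarrow> 'g \<Rightarrow> 'a \<Rightarrow> 'a) \<Rightarrow> bool" where
  "gamma_AGss S G m \<longleftrightarrow> gamma_AG S G m \<and>
     (\<forall>a\<in>S. \<forall>b\<in>S. \<forall>c\<in>S. \<forall>al\<in>G. \<forall>be\<in>G. m a al (m b be c) = m b al (m a be c))"

definition gprod :: "('a \<Rightarrow> 'g \<Rightarrow> 'a \<Rightarrow> 'a) \<Rightarrow> 'a set \<Rightarrow> 'g set \<Rightarrow> 'a set \<Rightarrow> 'a set" where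
  "gprod m A G B = {m a g b | a g b. a \<in> A \<and> g \<in> G \<and> b \<in> B}"

definition intra_regular :: "'a set \<Rightarrow> 'g set \<Rightarrow> ('a \<Rightarrow> 'g \<Rightarrow> 'a \<Rightarrow> 'a) \<Rightarrow> bool" where
  "intra_regular S G m \<longleftrightarrow> (\<forall>a\<in>S. \<exists>x\<in>S. \<exists>y\<in>S. \<exists>be\<in>G. \<exists>ga\<in>G. \<exists>de\<in>G.
      a = m (m x be (m a de a)) ga y)"

definition left_ideal where
  "left_ideal S G m A \<longleftrightarrow> A \<noteq> {} \<and> A \<subseteq> S \<and> gprod m S G A \<subseteq> A"

definition right_ideal where
  "right_ideal S G m A \<longleftrightarrow> A \<noteq> {} \<and> A \<subseteq> S \<and> gprod m A G S \<subseteq> A"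

definition two_sided_ideal where
  "two_sided_ideal S G m A \<longleftrightarrow> left_ideal S G m A \<and> right_ideal S G m A"

definition gen_bi_ideal where
  "gen_bi_ideal S G m A \<longleftrightarrow> A \<noteq> {} \<and> A \<subseteq> S \<and> gprod m (gprod m A G S) G A \<subseteq> A"

definition bi_ideal where
  "bi_ideal S G m A \<longleftrightarrow> A \<noteq> {} \<and> A \<subseteq> S \<and> gprod m A G A \<subseteq> A \<and>
     gprod m (gprod m A G S) G A \<subseteq> A"

definition interior_ideal where
  "interior_ideal S G m A \<longleftrightarrow> A \<noteq> {} \<and> A \<subseteq> S \<and> gprod m A G A \<subseteq> A \<and>
     gprod m (gprod m S G A) G S \<subseteq> A"

definition quasi_ideal where
  "quasi_ideal S G m A \<longleftrightarrow> A \<noteq> {} \<and> A \<subseteq> S \<and> gprod m A G A \<subseteq> A \<and>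
     gprod m S G A \<inter> gprod m A G S \<subseteq> A"

definition one_two_ideal where
  "one_two_ideal S G m A \<longleftrightarrow> A \<noteq> {} \<and> A \<subseteq> S \<and> gprod m A G A \<subseteq> A \<and>
     gprod m (gprod m A G S) G (gprod m A G A) \<subseteq> A"

end

theory Submission
  imports Defs
begin

locale agss = fixes S :: "'a set" and G :: "'g set" and m :: "'a \<Rightarrow> 'g \<Rightarrow> 'a \<Rightarrow> 'a"
  assumes cl[simp]: "x\<in>S \<Longrightarrow> g\<in>G \<Longrightarrow> y\<in>S \<Longrightarrow> m x g y \<in> S"
  and LI: "x\<in>S \<Longrightarrow> y\<in>S \<Longrightarrow> z\<in>S \<Longrightarrow> g\<in>G \<Longrightarrow> d\<in>G \<Longrightarrow> m (m x g y) d z = m (m z g y) d x"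
  and AG: "a\<in>S \<Longrightarrow> b\<in>S \<Longrightarrow> c\<in>S \<Longrightarrow> al\<in>G \<Longrightarrow> be\<in>G \<Longrightarrow> m a al (m b be c) = m b al (m a be c)"
begin
lemma gb_eq:
  assumes "a\<in>S" "s\<in>S" "x\<in>S" "y\<in>S" "g\<in>G" "be\<in>G" "de\<in>G" "ga\<in>G"
    and ha: "a = m (m x be (m a de a)) ga y"
  shows "m s g a = (m (m a be (m (m x be (m a de (m s ga y))) de (m x ga y))) g a)"
proof -
  have "m s g a = (m s g (m (m x be (m a de a)) ga y))"
  proof -
    have e: "a = (m (m x be (m a de a)) ga y)" by (rule ha)
    show ?thesis by (rule arg_cong[where f="\<lambda>u. (m s g u)", OF e])
  qed
  also have "... = (m (m x be (m a de a)) g (m s ga y))"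
  proof -
    have e: "(m s g (m (m x be (m a de a)) ga y)) = (m (m x be (m a de a)) g (m s ga y))" by (rule AG) (simp_all add: assms(1-8))
    show ?thesis by (rule arg_cong[where f="\<lambda>u. u", OF e])
  qed
  also have "... = (m (m a be (m x de a)) g (m s ga y))"
  proof -
    have e: "(m x be (m a de a)) = (m a be (m x de a))" by (rule AG) (simp_all add: assms(1-8))
    show ?thesis by (rule arg_cong[where f="\<lambda>u. (m u g (m s ga y))", OF e])
  qed
  also have "... = (m (m (m s ga y) be (m x de a)) g a)"
  proof -
    have e: "(m (m a be (m x de a)) g (m s ga y)) = (m (m (m s ga y) be (m x de a)) g a)" by (rule LI) (simp_all add: assms(1-8))
    show ?thesis by (rule arg_cong[where f="\<lambda>u. u", OF e])
  qed
  also have "... = (m (m (m s ga y) be (m x de (m (m x be (m a de a)) ga y))) g a)"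
  proof -
    have e: "a = (m (m x be (m a de a)) ga y)" by (rule ha)
    show ?thesis by (rule arg_cong[where f="\<lambda>u. (m (m (m s ga y) be (m x de u)) g a)", OF e])
  qed
  also have "... = (m (m (m s ga y) be (m (m x be (m a de a)) de (m x ga y))) g a)"
  proof -
    have e: "(m x de (m (m x be (m a de a)) ga y)) = (m (m x be (m a de a)) de (m x ga y))" by (rule AG) (simp_all add: assms(1-8))
    show ?thesis by (rule arg_cong[where f="\<lambda>u. (m (m (m s ga y) be u) g a)", OF e])
  qed
  also have "... = (m (m (m x be (m a de a)) be (m (m s ga y) de (m x ga y))) g a)"
  proof -
    have e: "(m (m s ga y) be (m (m x be (m a de a)) de (m x ga y))) = (m (m x be (m a de a)) be (m (m s ga y) de (m x ga y)))" by (rule AG) (simp_all add: assms(1-8))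
    show ?thesis by (rule arg_cong[where f="\<lambda>u. (m u g a)", OF e])
  qed
  also have "... = (m (m (m (m (m s ga y) de (m x ga y)) be (m a de a)) be x) g a)"
  proof -
    have e: "(m (m x be (m a de a)) be (m (m s ga y) de (m x ga y))) = (m (m (m (m s ga y) de (m x ga y)) be (m a de a)) be x)" by (rule LI) (simp_all add: assms(1-8))
    show ?thesis by (rule arg_cong[where f="\<lambda>u. (m u g a)", OF e])
  qed
  also have "... = (m (m (m a be (m (m (m s ga y) de (m x ga y)) de a)) be x) g a)"
  proof -
    have e: "(m (m (m s ga y) de (m x ga y)) be (m a de a)) = (m a be (m (m (m s ga y) de (m x ga y)) de a))" by (rule AG) (simp_all add: assms(1-8))
    show ?thesis by (rule arg_cong[where f="\<lambda>u. (m (m u be x) g a)", OF e])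
  qed
  also have "... = (m (m (m a be (m (m a de (m x ga y)) de (m s ga y))) be x) g a)"
  proof -
    have e: "(m (m (m s ga y) de (m x ga y)) de a) = (m (m a de (m x ga y)) de (m s ga y))" by (rule LI) (simp_all add: assms(1-8))
    show ?thesis by (rule arg_cong[where f="\<lambda>u. (m (m (m a be u) be x) g a)", OF e])
  qed
  also have "... = (m (m (m (m a de (m x ga y)) be (m a de (m s ga y))) be x) g a)"
  proof -
    have e: "(m a be (m (m a de (m x ga y)) de (m s ga y))) = (m (m a de (m x ga y)) be (m a de (m s ga y)))" by (rule AG) (simp_all add: assms(1-8))
    show ?thesis by (rule arg_cong[where f="\<lambda>u. (m (m u be x) g a)", OF e])
  qed
  also have "... = (m (m (m x be (m a de (m s ga y))) be (m a de (m x ga y))) g a)"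
  proof -
    have e: "(m (m (m a de (m x ga y)) be (m a de (m s ga y))) be x) = (m (m x be (m a de (m s ga y))) be (m a de (m x ga y)))" by (rule LI) (simp_all add: assms(1-8))
    show ?thesis by (rule arg_cong[where f="\<lambda>u. (m u g a)", OF e])
  qed
  also have "... = (m (m a be (m (m x be (m a de (m s ga y))) de (m x ga y))) g a)"
  proof -
    have e: "(m (m x be (m a de (m s ga y))) be (m a de (m x ga y))) = (m a be (m (m x be (m a de (m s ga y))) de (m x ga y)))" by (rule AG) (simp_all add: assms(1-8))
    show ?thesis by (rule arg_cong[where f="\<lambda>u. (m u g a)", OF e])
  qed
  finally show ?thesis .
qed

lemma ot_eq:
  assumes "a\<in>S" "s\<in>S" "x\<in>S" "y\<in>S" "g\<in>G" "be\<in>G" "de\<in>G" "ga\<in>G"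
    and ha: "a = m (m x be (m a de a)) ga y"
  shows "m s g a = (m (m a de (m (m (m (m s ga y) be x) be x) ga y)) g (m a de a))"
proof -
  have "m s g a = (m s g (m (m x be (m a de a)) ga y))"
  proof -
    have e: "a = (m (m x be (m a de a)) ga y)" by (rule ha)
    show ?thesis by (rule arg_cong[where f="\<lambda>u. (m s g u)", OF e])
  qed
  also have "... = (m (m x be (m a de a)) g (m s ga y))"
  proof -
    have e: "(m s g (m (m x be (m a de a)) ga y)) = (m (m x be (m a de a)) g (m s ga y))" by (rule AG) (simp_all add: assms(1-8))
    show ?thesis by (rule arg_cong[where f="\<lambda>u. u", OF e])
  qed
  also have "... = (m (m x be (m a de (m (m x be (m a de a)) ga y))) g (m s ga y))"
  proof -
    have e: "a = (m (m x be (m a de a)) ga y)" by (rule ha)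
    show ?thesis by (rule arg_cong[where f="\<lambda>u. (m (m x be (m a de u)) g (m s ga y))", OF e])
  qed
  also have "... = (m (m x be (m (m x be (m a de a)) de (m a ga y))) g (m s ga y))"
  proof -
    have e: "(m a de (m (m x be (m a de a)) ga y)) = (m (m x be (m a de a)) de (m a ga y))" by (rule AG) (simp_all add: assms(1-8))
    show ?thesis by (rule arg_cong[where f="\<lambda>u. (m (m x be u) g (m s ga y))", OF e])
  qed
  also have "... = (m (m (m x be (m a de a)) be (m x de (m a ga y))) g (m s ga y))"
  proof -
    have e: "(m x be (m (m x be (m a de a)) de (m a ga y))) = (m (m x be (m a de a)) be (m x de (m a ga y)))" by (rule AG) (simp_all add: assms(1-8))
    show ?thesis by (rule arg_cong[where f="\<lambda>u. (m u g (m s ga y))", OF e])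
  qed
  also have "... = (m (m (m (m x de (m a ga y)) be (m a de a)) be x) g (m s ga y))"
  proof -
    have e: "(m (m x be (m a de a)) be (m x de (m a ga y))) = (m (m (m x de (m a ga y)) be (m a de a)) be x)" by (rule LI) (simp_all add: assms(1-8))
    show ?thesis by (rule arg_cong[where f="\<lambda>u. (m u g (m s ga y))", OF e])
  qed
  also have "... = (m (m (m s ga y) be x) g (m (m x de (m a ga y)) be (m a de a)))"
  proof -
    have e: "(m (m (m (m x de (m a ga y)) be (m a de a)) be x) g (m s ga y)) = (m (m (m s ga y) be x) g (m (m x de (m a ga y)) be (m a de a)))" by (rule LI) (simp_all add: assms(1-8))
    show ?thesis by (rule arg_cong[where f="\<lambda>u. u", OF e])
  qed
  also have "... = (m (m (m s ga y) be x) g (m (m (m a de a) de (m a ga y)) be x))"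
  proof -
    have e: "(m (m x de (m a ga y)) be (m a de a)) = (m (m (m a de a) de (m a ga y)) be x)" by (rule LI) (simp_all add: assms(1-8))
    show ?thesis by (rule arg_cong[where f="\<lambda>u. (m (m (m s ga y) be x) g u)", OF e])
  qed
  also have "... = (m (m (m a de a) de (m a ga y)) g (m (m (m s ga y) be x) be x))"
  proof -
    have e: "(m (m (m s ga y) be x) g (m (m (m a de a) de (m a ga y)) be x)) = (m (m (m a de a) de (m a ga y)) g (m (m (m s ga y) be x) be x))" by (rule AG) (simp_all add: assms(1-8))
    show ?thesis by (rule arg_cong[where f="\<lambda>u. u", OF e])
  qed
  also have "... = (m (m (m (m (m s ga y) be x) be x) de (m a ga y)) g (m a de a))"
  proof -
    have e: "(m (m (m a de a) de (m a ga y)) g (m (m (m s ga y) be x) be x)) = (m (m (m (m (m s ga y) be x) be x) de (m a ga y)) g (m a de a))" by (rule LI) (simp_all add: assms(1-8))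
    show ?thesis by (rule arg_cong[where f="\<lambda>u. u", OF e])
  qed
  also have "... = (m (m a de (m (m (m (m s ga y) be x) be x) ga y)) g (m a de a))"
  proof -
    have e: "(m (m (m (m s ga y) be x) be x) de (m a ga y)) = (m a de (m (m (m (m s ga y) be x) be x) ga y))" by (rule AG) (simp_all add: assms(1-8))
    show ?thesis by (rule arg_cong[where f="\<lambda>u. (m u g (m a de a))", OF e])
  qed
  finally show ?thesis .
qed

lemma e_LR:
  assumes "a\<in>S" "s\<in>S" "x\<in>S" "y\<in>S" "g\<in>G" "be\<in>G" "de\<in>G" "ga\<in>G"
    and ha: "a = m (m x be (m a de a)) ga y"
  shows "m a g s = m x g (m (m s ga y) be (m a de a))"
proof -
  have "m a g s = m (m (m x be (m a de a)) ga y) g s" by (rule arg_cong[where f="\<lambda>u. m u g s", OF ha])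
  also have "... = m (m s ga y) g (m x be (m a de a))" by (rule LI) (simp_all add: assms(1-8))
  also have "... = m x g (m (m s ga y) be (m a de a))" by (rule AG) (simp_all add: assms(1-8))
  finally show ?thesis .
qed

lemma e_int:
  assumes "a\<in>S" "s\<in>S" "x\<in>S" "y\<in>S" "g\<in>G" "be\<in>G" "de\<in>G" "ga\<in>G"
    and ha: "a = m (m x be (m a de a)) ga y"
  shows "m s g a = m (m x be (m a de a)) g (m s ga y)"
proof -
  have "m s g a = m s g (m (m x be (m a de a)) ga y)" by (rule arg_cong[where f="\<lambda>u. m s g u", OF ha])
  also have "... = m (m x be (m a de a)) g (m s ga y)" by (rule AG) (simp_all add: assms(1-8))
  finally show ?thesis .
qed

lemma e_Q:
  assumes "a\<in>S" "s\<in>S" "x\<in>S" "y\<in>S" "g\<in>G" "be\<in>G" "de\<in>G" "ga\<in>G"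
    and ha: "a = m (m x be (m a de a)) ga y"
  shows "m s g a = m (m (m s ga y) be (m a de a)) g x"
proof -
  have "m s g a = m (m x be (m a de a)) g (m s ga y)" by (rule e_int[OF assms])
  also have "... = m (m (m s ga y) be (m a de a)) g x" by (rule LI) (simp_all add: assms(1-8))
  finally show ?thesis .
qed

lemma e_w:
  assumes "a\<in>S" "s\<in>S" "y\<in>S" "be\<in>G" "de\<in>G" "ga\<in>G"
  shows "m (m s ga y) be (m a de a) = m a be (m (m s ga y) de a)"
  by (rule AG) (simp_all add: assms)

lemma memI: "p\<in>P \<Longrightarrow> g\<in>G \<Longrightarrow> q\<in>Q \<Longrightarrow> m p g q \<in> gprod m P G Q"
  by (auto simp: gprod_def)

lemma memE: "z \<in> gprod m P G' Q \<Longrightarrow> (\<And>p g q. z = m p g q \<Longrightarrow> p\<in>P \<Longrightarrow> g\<in>G' \<Longrightarrow> q\<in>Q \<Longrightarrow> R) \<Longrightarrow> R"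
  by (auto simp: gprod_def)

end

lemma agss_of: "gamma_AGss S G m \<Longrightarrow> agss S G m"
  unfolding gamma_AGss_def gamma_AG_def gamma_closed_def agss_def by blast

theorem mainTheorem9:
  fixes S :: "'a set" and G :: "'g set" and m :: "'a \<Rightarrow> 'g \<Rightarrow> 'a \<Rightarrow> 'a" and A :: "'a set"
  assumes "gamma_AGss S G m" and "intra_regular S G m"
    and "A \<noteq> {}" and "A \<subseteq> S"
  shows "(left_ideal S G m A \<longleftrightarrow> right_ideal S G m A)
    \<and> (right_ideal S G m A \<longleftrightarrow> two_sided_ideal S G m A)
    \<and> (two_sided_ideal S G m A \<longleftrightarrow> (gprod m A G S = A \<and> gprod m S G A = A))
    \<and> ((gprod m A G S = A \<and> gprod m S G A = A) \<longleftrightarrow> quasi_ideal S G m A)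
    \<and> (quasi_ideal S G m A \<longleftrightarrow> one_two_ideal S G m A)
    \<and> (one_two_ideal S G m A \<longleftrightarrow> gen_bi_ideal S G m A)
    \<and> (gen_bi_ideal S G m A \<longleftrightarrow> bi_ideal S G m A)
    \<and> (bi_ideal S G m A \<longleftrightarrow> interior_ideal S G m A)"
proof -
  interpret agss S G m by (rule agss_of[OF assms(1)])
  have AS: "\<And>a. a\<in>A \<Longrightarrow> a\<in>S" using assms(4) by blast
  have IR: "\<And>a. a\<in>S \<Longrightarrow> \<exists>x y be ga de. x\<in>S \<and> y\<in>S \<and> be\<in>G \<and> ga\<in>G \<and> de\<in>G \<and> a = m (m x be (m a de a)) ga y"
    using assms(2) unfolding intra_regular_def by blast
  define L where "L = (\<forall>p\<in>S. \<forall>g\<in>G. \<forall>q\<in>A. m p g q \<in> A)"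
  define R where "R = (\<forall>p\<in>A. \<forall>g\<in>G. \<forall>q\<in>S. m p g q \<in> A)"
  have Ldef: "left_ideal S G m A \<longleftrightarrow> L"
    unfolding left_ideal_def L_def unfolding gprod_def using assms(3,4) by blast
  have Rdef: "right_ideal S G m A \<longleftrightarrow> R"
    unfolding right_ideal_def R_def unfolding gprod_def using assms(3,4) by blast
  have LR: "L \<Longrightarrow> R"
  proof -
    assume L: L
    show R unfolding R_def
    proof (intro ballI)
      fix a g s assume a: "a\<in>A" and g: "g\<in>G" and s: "s\<in>S"
      obtain x y be ga de where w: "x\<in>S" "y\<in>S" "be\<in>G" "ga\<in>G" "de\<in>G" and ha: "a = m (m x be (m a de a)) ga y"
        using IR[OF AS[OF a]] by blast
      have "m a de a \<in> A" using L a AS w unfolding L_def by blast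
      hence "m (m s ga y) be (m a de a) \<in> A" using L s w unfolding L_def by auto
      hence "m x g (m (m s ga y) be (m a de a)) \<in> A" using L g w unfolding L_def by auto
      thus "m a g s \<in> A" using e_LR[OF AS[OF a] s w(1,2) g w(3,5,4) ha] by simp
    qed
  qed
  have RL: "R \<Longrightarrow> L"
  proof -
    assume R: R
    show L unfolding L_def
    proof (intro ballI)
      fix s g a assume a: "a\<in>A" and g: "g\<in>G" and s: "s\<in>S"
      obtain x y be ga de where w: "x\<in>S" "y\<in>S" "be\<in>G" "ga\<in>G" "de\<in>G" and ha: "a = m (m x be (m a de a)) ga y"
        using IR[OF AS[OF a]] by blast
      have "m a be (m (m s ga y) de a) \<in> A" using R a AS w s unfolding R_def by auto
      hence "m (m a be (m (m s ga y) de a)) g x \<in> A" using R g w unfolding R_def by auto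
      thus "m s g a \<in> A" using e_Q[OF AS[OF a] s w(1,2) g w(3,5,4) ha] e_w[OF AS[OF a] s w(2,3,5,4)] by simp
    qed
  qed
  have Leq: "L \<Longrightarrow> gprod m A G S = A \<and> gprod m S G A = A"
  proof -
    assume L: L
    hence R: R by (rule LR)
    have 1: "gprod m A G S \<subseteq> A" using R unfolding R_def by (auto elim: memE)
    have 2: "gprod m S G A \<subseteq> A" using L unfolding L_def by (auto elim: memE)
    have 3: "A \<subseteq> gprod m A G S"
    proof
      fix a assume a: "a\<in>A"
      obtain x y be ga de where w: "x\<in>S" "y\<in>S" "be\<in>G" "ga\<in>G" "de\<in>G" and ha: "a = m (m x be (m a de a)) ga y"
        using IR[OF AS[OF a]] by blast
      have "m a de a \<in> A" using L a AS w unfolding L_def by blast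
      hence "m x be (m a de a) \<in> A" using L w unfolding L_def by auto
      hence "m (m x be (m a de a)) ga y \<in> gprod m A G S" using w by (intro memI)
      with ha show "a \<in> gprod m A G S" by (rule ssubst)
    qed
    have 4: "A \<subseteq> gprod m S G A"
    proof
      fix a assume a: "a\<in>A"
      obtain x y be ga de where w: "x\<in>S" "y\<in>S" "be\<in>G" "ga\<in>G" "de\<in>G" and ha: "a = m (m x be (m a de a)) ga y"
        using IR[OF AS[OF a]] by blast
      obtain x' y' be' ga' de' where w': "x'\<in>S" "y'\<in>S" "be'\<in>G" "ga'\<in>G" "de'\<in>G" and hy: "y = m (m x' be' (m y de' y)) ga' y'"
        using IR[OF w(2)] by blast
      have "m a de a \<in> A" using L a AS w unfolding L_def by blast
      hence u: "m x be (m a de a) \<in> A" using L w unfolding L_def by auto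
      hence uy: "m (m x be (m a de a)) ga' y' \<in> A" using R w' unfolding R_def by auto
      have "a = m (m x be (m a de a)) ga y" by (rule ha)
      also have "... = m (m x be (m a de a)) ga (m (m x' be' (m y de' y)) ga' y')"
        by (rule arg_cong[where f="\<lambda>u. m (m x be (m a de a)) ga u", OF hy])
      also have "... = m (m x' be' (m y de' y)) ga (m (m x be (m a de a)) ga' y')"
        using u AS w w' by (intro AG) auto
      finally have "a = m (m x' be' (m y de' y)) ga (m (m x be (m a de a)) ga' y')" .
      moreover have "m (m x' be' (m y de' y)) ga (m (m x be (m a de a)) ga' y') \<in> gprod m S G A"
        using uy w w' by (intro memI) auto
      ultimately show "a \<in> gprod m S G A" by (rule ssubst)
    qed
    show ?thesis using 1 2 3 4 by blast
  qed
  have eqL: "gprod m A G S = A \<and> gprod m S G A = A \<Longrightarrow> L"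
    unfolding L_def by (auto intro: memI)
  have LQ: "L \<Longrightarrow> quasi_ideal S G m A"
  proof -
    assume L: L
    have "gprod m A G A \<subseteq> A" using L AS unfolding L_def by (auto elim: memE)
    moreover have "gprod m S G A \<subseteq> A" using L unfolding L_def by (auto elim: memE)
    ultimately show ?thesis unfolding quasi_ideal_def using assms(3,4) by blast
  qed
  have QL: "quasi_ideal S G m A \<Longrightarrow> L"
  proof -
    assume Q: "quasi_ideal S G m A"
    have AA: "\<And>p g q. p\<in>A \<Longrightarrow> g\<in>G \<Longrightarrow> q\<in>A \<Longrightarrow> m p g q \<in> A"
      using Q unfolding quasi_ideal_def by (blast intro: memI)
    have QQ: "\<And>z. z\<in>gprod m S G A \<Longrightarrow> z\<in>gprod m A G S \<Longrightarrow> z\<in>A"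
      using Q unfolding quasi_ideal_def by blast
    show L unfolding L_def
    proof (intro ballI)
      fix s g a assume s: "s\<in>S" and g: "g\<in>G" and a: "a\<in>A"
      obtain x y be ga de where w: "x\<in>S" "y\<in>S" "be\<in>G" "ga\<in>G" "de\<in>G" and ha: "a = m (m x be (m a de a)) ga y"
        using IR[OF AS[OF a]] by blast
      have aa: "m a de a \<in> A" using AA a w by blast
      have "m (m s ga y) be (m a de a) \<in> gprod m S G A" using aa s w by (intro memI) auto
      moreover have "m (m s ga y) be (m a de a) \<in> gprod m A G S"
        unfolding e_w[OF AS[OF a] s w(2,3,5,4)] using a AS s w by (intro memI) auto
      ultimately have W: "m (m s ga y) be (m a de a) \<in> A" by (rule QQ)
      have 1: "m s g a \<in> gprod m A G S"
        unfolding e_Q[OF AS[OF a] s w(1,2) g w(3,5,4) ha] using W g w by (intro memI)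
      have 2: "m s g a \<in> gprod m S G A" using s g a by (intro memI)
      show "m s g a \<in> A" using QQ[OF 2 1] .
    qed
  qed
  have L12: "L \<Longrightarrow> one_two_ideal S G m A"
  proof -
    assume L: L
    hence R: R by (rule LR)
    have "gprod m A G A \<subseteq> A" using L AS unfolding L_def by (auto elim: memE)
    moreover have "gprod m (gprod m A G S) G (gprod m A G A) \<subseteq> A"
    proof
      fix z assume "z \<in> gprod m (gprod m A G S) G (gprod m A G A)"
      then obtain p g q where "z = m p g q" "p \<in> gprod m A G S" "g\<in>G" "q \<in> gprod m A G A" by (rule memE)
      moreover have "p \<in> A" using \<open>p \<in> gprod m A G S\<close> R unfolding R_def by (auto elim: memE)
      moreover have "q \<in> S" using \<open>q \<in> gprod m A G A\<close> AS by (auto elim!: memE)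
      ultimately show "z \<in> A" using R unfolding R_def by auto
    qed
    ultimately show ?thesis unfolding one_two_ideal_def using assms(3,4) by blast
  qed
  have L12': "one_two_ideal S G m A \<Longrightarrow> L"
  proof -
    assume Q: "one_two_ideal S G m A"
    have AA: "\<And>p g q. p\<in>A \<Longrightarrow> g\<in>G \<Longrightarrow> q\<in>A \<Longrightarrow> m p g q \<in> A"
      using Q unfolding one_two_ideal_def by (blast intro: memI)
    have QQ: "\<And>p g q g' t g''. p\<in>A \<Longrightarrow> g\<in>G \<Longrightarrow> t\<in>S \<Longrightarrow> g'\<in>G \<Longrightarrow> q\<in>A \<Longrightarrow> g''\<in>G \<Longrightarrow> m (m p g t) g' (m q g'' q) \<in> A"
      using Q unfolding one_two_ideal_def by (blast intro: memI)
    show L unfolding L_def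
    proof (intro ballI)
      fix s g a assume s: "s\<in>S" and g: "g\<in>G" and a: "a\<in>A"
      obtain x y be ga de where w: "x\<in>S" "y\<in>S" "be\<in>G" "ga\<in>G" "de\<in>G" and ha: "a = m (m x be (m a de a)) ga y"
        using IR[OF AS[OF a]] by blast
      show "m s g a \<in> A"
        unfolding ot_eq[OF AS[OF a] s w(1,2) g w(3,5,4) ha] using a s w g AS by (intro QQ) auto
    qed
  qed
  have Lgb: "L \<Longrightarrow> bi_ideal S G m A"
  proof -
    assume L: L
    hence R: R by (rule LR)
    have "gprod m A G A \<subseteq> A" using L AS unfolding L_def by (auto elim: memE)
    moreover have "gprod m (gprod m A G S) G A \<subseteq> A"
    proof
      fix z assume "z \<in> gprod m (gprod m A G S) G A"
      then obtain p g q where "z = m p g q" "p \<in> gprod m A G S" "g\<in>G" "q \<in> A" by (rule memE)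
      moreover have "p \<in> A" using \<open>p \<in> gprod m A G S\<close> R unfolding R_def by (auto elim: memE)
      ultimately show "z \<in> A" using R AS unfolding R_def by auto
    qed
    ultimately show ?thesis unfolding bi_ideal_def using assms(3,4) by blast
  qed
  have bigb: "bi_ideal S G m A \<Longrightarrow> gen_bi_ideal S G m A" unfolding bi_ideal_def gen_bi_ideal_def by blast
  have gbL: "gen_bi_ideal S G m A \<Longrightarrow> L"
  proof -
    assume Q: "gen_bi_ideal S G m A"
    have QQ: "\<And>p g t g' q. p\<in>A \<Longrightarrow> g\<in>G \<Longrightarrow> t\<in>S \<Longrightarrow> g'\<in>G \<Longrightarrow> q\<in>A \<Longrightarrow> m (m p g t) g' q \<in> A"
      using Q unfolding gen_bi_ideal_def by (blast intro: memI)
    show L unfolding L_def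
    proof (intro ballI)
      fix s g a assume s: "s\<in>S" and g: "g\<in>G" and a: "a\<in>A"
      obtain x y be ga de where w: "x\<in>S" "y\<in>S" "be\<in>G" "ga\<in>G" "de\<in>G" and ha: "a = m (m x be (m a de a)) ga y"
        using IR[OF AS[OF a]] by blast
      show "m s g a \<in> A"
        unfolding gb_eq[OF AS[OF a] s w(1,2) g w(3,5,4) ha] using a s w g AS by (intro QQ) auto
    qed
  qed
  have LI': "L \<Longrightarrow> interior_ideal S G m A"
  proof -
    assume L: L
    hence R: R by (rule LR)
    have "gprod m A G A \<subseteq> A" using L AS unfolding L_def by (auto elim: memE)
    moreover have "gprod m (gprod m S G A) G S \<subseteq> A"
    proof
      fix z assume "z \<in> gprod m (gprod m S G A) G S"
      then obtain p g q where "z = m p g q" "p \<in> gprod m S G A" "g\<in>G" "q \<in> S" by (rule memE)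
      moreover have "p \<in> A" using \<open>p \<in> gprod m S G A\<close> L unfolding L_def by (auto elim: memE)
      ultimately show "z \<in> A" using R unfolding R_def by auto
    qed
    ultimately show ?thesis unfolding interior_ideal_def using assms(3,4) by blast
  qed
  have IL: "interior_ideal S G m A \<Longrightarrow> L"
  proof -
    assume Q: "interior_ideal S G m A"
    have AA: "\<And>p g q. p\<in>A \<Longrightarrow> g\<in>G \<Longrightarrow> q\<in>A \<Longrightarrow> m p g q \<in> A"
      using Q unfolding interior_ideal_def by (blast intro: memI)
    have QQ: "\<And>p g t g' q. p\<in>S \<Longrightarrow> g\<in>G \<Longrightarrow> t\<in>A \<Longrightarrow> g'\<in>G \<Longrightarrow> q\<in>S \<Longrightarrow> m (m p g t) g' q \<in> A"
      using Q unfolding interior_ideal_def by (blast intro: memI)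
    show L unfolding L_def
    proof (intro ballI)
      fix s g a assume s: "s\<in>S" and g: "g\<in>G" and a: "a\<in>A"
      obtain x y be ga de where w: "x\<in>S" "y\<in>S" "be\<in>G" "ga\<in>G" "de\<in>G" and ha: "a = m (m x be (m a de a)) ga y"
        using IR[OF AS[OF a]] by blast
      show "m s g a \<in> A"
        unfolding e_int[OF AS[OF a] s w(1,2) g w(3,5,4) ha] using a s w g AS AA by (intro QQ) auto
    qed
  qed
  have TS: "two_sided_ideal S G m A \<longleftrightarrow> L"
    unfolding two_sided_ideal_def Ldef Rdef using LR by blast
  have EQ: "(gprod m A G S = A \<and> gprod m S G A = A) \<longleftrightarrow> L" using Leq eqL by blast
  show ?thesis unfolding TS EQ Ldef Rdef
    using LR RL LQ QL L12 L12' Lgb bigb gbL LI' IL by blast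
qed

end
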